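(* Consider the problem and the SC-SCSG algorithm described in the context, and suppose Assumptions (A2) and (A6) hold. Then at every inner iteration $k$ of epoch $s$, with $A=|\mathcal A|$ and $D=|\mathcal D_1|$, $$\mathbb{E}_{\mathcal A,\mathcal D_1}\|\hat G_k-G(x_k)\|^2\le 4\Big(\frac{\mathbb{I}(A<n)}{A}+\frac{\mathbb{I}(D<n)}{D}\Big)B_G^2\,\mathbb{E}\|x_k-\tilde x_s\|^2+2\frac{\mathbb{I}(D<n)}{D}H_1 .$$
   Context: Problem: minimize $f(x)=F(G(x))=\frac1n\sum_{i=1}^nF_i\big(\frac1n\sum_{j=1}^nG_j(x)\big)$ over $x\in\mathbb{R}^N$, where $G_j:\mathbb{R}^N\to\mathbb{R}^M$, $F_i:\mathbb{R}^M\to\mathbb{R}$, $G=\frac1n\sum_jG_j$, $F=\frac1n\sum_iF_i$, $\partial G_j(x)\in\mathbb{R}^{M\times N}$ is the Jacobian, so $\nabla f(x)=(\partial G(x))^\top\nabla F(G(x))$. For a multiset $\mathcal S$ of indices from $[n]$, $G_{\mathcal S}=\frac1{|\mathcal S|}\sum_{j\in\mathcal S}G_j$, and similarly $\partial G_{\mathcal S}$, $F_{\mathcal S}$. $\mathbb{I}(\cdot)$ is the indicator function. Algorithm (SC-SCSG): parameters $K$ (inner iterations), $S$ (epochs), step $\eta>0$, batch sizes $A\le D$, initial point $\tilde x_0$. For each epoch $s=0,\dots,S-1$: form $\mathcal D_1,\mathcal D_2$, each of $D$ indices sampled independently and uniformly from $[n]$ (independent of each other); set $\nabla\hat f_{\mathcal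 D}(\tilde x_s)=(\partial G_{\mathcal D_1}(\tilde x_s))^\top\nabla F_{\mathcal D_2}(G_{\mathcal D_1}(\tilde x_s))$ and $x_0=\tilde x_s$. For $k=0,\dots,K-1$: sample a mini-batch $\mathcal A$ of $A$ indices from $[n]$ (independent of $\mathcal D$), set $\hat G_k=G_{\mathcal A}(x_k)-G_{\mathcal A}(\tilde x_s)+G_{\mathcal D_1}(\tilde x_s)$; draw $i_k,j_k$ independently uniformly from $[n]$; set $\nabla\tilde f_k=(\partial G_{j_k}(x_k))^\top\nabla F_{i_k}(\hat G_k)-(\partial G_{j_k}(\tilde x_s))^\top\nabla F_{i_k}(G_{\mathcal D_1}(\tilde x_s))+\nabla\hat f_{\mathcal D}(\tilde x_s)$ and $x_{k+1}=x_k-\eta\nabla\tilde f_k$. Then $\tilde x_{s+1}=x_K$. Within an epoch $x_k$ denotes the $k$-th inner iterate of epoch $s$. (A2) For all $j$ and $x,y\in\mathbb{R}^N$: $\|\partial G_j(x)\|\le B_G$ (so $\|G_j(x)-G_j(y)\|\le B_G\|x-y\|$) and $\|\partial G_j(x)-\partial G_j(y)\|\le L_G\|x-y\|$. (A6) For all $x\in\mathbb{R}^N,y\in\mathbb{R}^M$: $\frac1n\sum_{i=1}^n\|G(x)-G_i(x)\|^2\le H_1$ and $\frac1{n^2}\sum_{i,j=1}^n\|(\partial G(x))^\top\nabla F(y)-(\partial G_j(x))^\top\nabla F_i(y)\|^2\le H_2$. *)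

theory Defs
  imports "HOL-Analysis.Analysis" "HOL-Probability.Probability"
begin

text \<open>Indices range over [n] = {0..<n}. Vectors in R^N are real^'n, in R^M real^'m;
  a Jacobian (M x N matrix) is real^'n^'m.\<close>

text \<open>Average over a multiset of indices given as a list: f_S = (1/|S|) sum_{j in S} f_j.\<close>
definition bavg :: "nat list \<Rightarrow> (nat \<Rightarrow> 'a::real_vector) \<Rightarrow> 'a" where
  "bavg S f = (1 / real (length S)) *\<^sub>R sum_list (map f S)"

definition favg :: "nat \<Rightarrow> (nat \<Rightarrow> 'a::real_vector) \<Rightarrow> 'a" where
  "favg n f = (1 / real n) *\<^sub>R (\<Sum>j<n. f j)"

fun iid_list :: "nat \<Rightarrow> 'a pmf \<Rightarrow> 'a list pmf" where
  "iid_list 0 p = return_pmf []"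
| "iid_list (Suc m) p = bind_pmf p (\<lambda>x. map_pmf (\<lambda>xs. x # xs) (iid_list m p))"

text \<open>Mini-batch of size m: m i.i.d. uniform indices from [n] when m < n; when m \<ge> n the
  full index set is used (this is the convention behind the indicator I(m<n)).\<close>
definition batch_pmf :: "nat \<Rightarrow> nat \<Rightarrow> nat list pmf" where
  "batch_pmf n m = (if m < n then iid_list m (pmf_of_set {..<n}) else return_pmf [0..<n])"

definition Ghat :: "(nat \<Rightarrow> real^'n \<Rightarrow> real^'m) \<Rightarrow> nat list \<Rightarrow> nat list
    \<Rightarrow> real^'n \<Rightarrow> real^'n \<Rightarrow> real^'m" where
  "Ghat G Ab D1 xt x = bavg Ab (\<lambda>l. G l x) - bavg Ab (\<lambda>l. G l xt) + bavg D1 (\<lambda>l. G l xt)"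

definition gradD :: "(nat \<Rightarrow> real^'n \<Rightarrow> real^'m) \<Rightarrow> (nat \<Rightarrow> real^'n \<Rightarrow> real^'n^'m)
    \<Rightarrow> (nat \<Rightarrow> real^'m \<Rightarrow> real^'m) \<Rightarrow> nat list \<Rightarrow> nat list \<Rightarrow> real^'n \<Rightarrow> real^'n" where
  "gradD G JG gF D1 D2 xt =
     transpose (bavg D1 (\<lambda>l. JG l xt)) *v bavg D2 (\<lambda>l. gF l (bavg D1 (\<lambda>l. G l xt)))"

definition sc_step :: "nat \<Rightarrow> (nat \<Rightarrow> real^'n \<Rightarrow> real^'m) \<Rightarrow> (nat \<Rightarrow> real^'n \<Rightarrow> real^'n^'m)
    \<Rightarrow> (nat \<Rightarrow> real^'m \<Rightarrow> real^'m) \<Rightarrow> nat \<Rightarrow> real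
    \<Rightarrow> real^'n \<Rightarrow> nat list \<Rightarrow> nat list \<Rightarrow> real^'n \<Rightarrow> (real^'n) pmf" where
  "sc_step n G JG gF A \<eta> xt D1 D2 x =
     bind_pmf (batch_pmf n A) (\<lambda>Ab.
     bind_pmf (pmf_of_set {..<n}) (\<lambda>i.
     bind_pmf (pmf_of_set {..<n}) (\<lambda>j.
       return_pmf (x - \<eta> *\<^sub>R
         (transpose (JG j x) *v gF i (Ghat G Ab D1 xt x)
          - transpose (JG j xt) *v gF i (bavg D1 (\<lambda>l. G l xt))
          + gradD G JG gF D1 D2 xt)))))"

fun sc_inner :: "nat \<Rightarrow> (nat \<Rightarrow> real^'n \<Rightarrow> real^'m) \<Rightarrow> (nat \<Rightarrow> real^'n \<Rightarrow> real^'n^'m)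
    \<Rightarrow> (nat \<Rightarrow> real^'m \<Rightarrow> real^'m) \<Rightarrow> nat \<Rightarrow> real
    \<Rightarrow> nat \<Rightarrow> real^'n \<Rightarrow> nat list \<Rightarrow> nat list \<Rightarrow> (real^'n) pmf" where
  "sc_inner n G JG gF A \<eta> 0 xt D1 D2 = return_pmf xt"
| "sc_inner n G JG gF A \<eta> (Suc k) xt D1 D2 =
     bind_pmf (sc_inner n G JG gF A \<eta> k xt D1 D2) (sc_step n G JG gF A \<eta> xt D1 D2)"

fun sc_outer :: "nat \<Rightarrow> (nat \<Rightarrow> real^'n \<Rightarrow> real^'m) \<Rightarrow> (nat \<Rightarrow> real^'n \<Rightarrow> real^'n^'m)
    \<Rightarrow> (nat \<Rightarrow> real^'m \<Rightarrow> real^'m) \<Rightarrow> nat \<Rightarrow> nat \<Rightarrow> real \<Rightarrow> nat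
    \<Rightarrow> real^'n \<Rightarrow> nat \<Rightarrow> (real^'n) pmf" where
  "sc_outer n G JG gF A D \<eta> K x0 0 = return_pmf x0"
| "sc_outer n G JG gF A D \<eta> K x0 (Suc s) =
     bind_pmf (sc_outer n G JG gF A D \<eta> K x0 s) (\<lambda>xt.
     bind_pmf (batch_pmf n D) (\<lambda>D1.
     bind_pmf (batch_pmf n D) (\<lambda>D2. sc_inner n G JG gF A \<eta> K xt D1 D2)))"

definition sc_state :: "nat \<Rightarrow> (nat \<Rightarrow> real^'n \<Rightarrow> real^'m) \<Rightarrow> (nat \<Rightarrow> real^'n \<Rightarrow> real^'n^'m)
    \<Rightarrow> (nat \<Rightarrow> real^'m \<Rightarrow> real^'m) \<Rightarrow> nat \<Rightarrow> nat \<Rightarrow> real \<Rightarrow> nat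
    \<Rightarrow> real^'n \<Rightarrow> nat \<Rightarrow> nat \<Rightarrow> ((real^'n) \<times> nat list \<times> (real^'n)) pmf" where
  "sc_state n G JG gF A D \<eta> K x0 s k =
     bind_pmf (sc_outer n G JG gF A D \<eta> K x0 s) (\<lambda>xt.
     bind_pmf (batch_pmf n D) (\<lambda>D1.
     bind_pmf (batch_pmf n D) (\<lambda>D2.
       map_pmf (\<lambda>x. (xt, D1, x)) (sc_inner n G JG gF A \<eta> k xt D1 D2))))"

end

theory Submission
  imports Defs
begin

lemma fin_iid: "finite (set_pmf p) \<Longrightarrow> finite (set_pmf (iid_list m p))"
  by (induction m) auto

lemma len_iid: "S \<in> set_pmf (iid_list m p) \<Longrightarrow> length S = m"
  by (induction m arbitrary: S) auto

lemma set_pos: "0 < n \<Longrightarrow> set_pmf (pmf_of_set {..<(n::nat)}) = {..<n}"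
  by (subst set_pmf_of_set) auto

lemma fin_batch: "finite (set_pmf (batch_pmf n m))"
  unfolding batch_pmf_def by (auto intro!: fin_iid simp: set_pos)

lemma fin_inner: "0 < n \<Longrightarrow> finite (set_pmf (sc_inner n G JG gF A \<eta> k xt D1 D2))"
  by (induction k) (auto simp: sc_step_def fin_batch set_pos)

lemma fin_outer: "0 < n \<Longrightarrow> finite (set_pmf (sc_outer n G JG gF A D \<eta> K x0 s))"
  by (induction s) (auto simp: fin_batch fin_inner)

lemma fin_state: "0 < n \<Longrightarrow> finite (set_pmf (sc_state n G JG gF A D \<eta> K x0 s k))"
  unfolding sc_state_def by (auto simp: fin_batch fin_inner fin_outer)

lemma exp_nn:
  fixes f :: "'a \<Rightarrow> real"
  assumes "finite (set_pmf M)" "\<And>y. 0 \<le> f y"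
  shows "ennreal (measure_pmf.expectation M f) = (\<integral>\<^sup>+x. ennreal (f x) \<partial>M)"
  using assms by (subst nn_integral_eq_integral) (auto intro: integrable_measure_pmf_finite)

lemma exp_bind:
  fixes f :: "'b \<Rightarrow> real"
  assumes "finite (set_pmf M)" "\<And>x. x \<in> set_pmf M \<Longrightarrow> finite (set_pmf (N x))" "\<And>y. 0 \<le> f y"
  shows "measure_pmf.expectation (bind_pmf M N) f = measure_pmf.expectation M (\<lambda>x. measure_pmf.expectation (N x) f)"
proof -
  have fb: "finite (set_pmf (bind_pmf M N))" using assms by auto
  have "ennreal (measure_pmf.expectation (bind_pmf M N) f) = (\<integral>\<^sup>+x. \<integral>\<^sup>+y. ennreal (f y) \<partial>N x \<partial>M)"
    using exp_nn[OF fb assms(3)] by simp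
  also have "\<dots> = (\<integral>\<^sup>+x. ennreal (measure_pmf.expectation (N x) f) \<partial>M)"
    by (intro nn_integral_cong_AE) (auto simp: AE_measure_pmf_iff exp_nn assms)
  also have "\<dots> = ennreal (measure_pmf.expectation M (\<lambda>x. measure_pmf.expectation (N x) f))"
    by (rule exp_nn[symmetric]) (auto intro: assms integral_nonneg_AE)
  finally show ?thesis by (simp add: integral_nonneg_AE assms)
qed

lemma exp_pair:
  fixes f :: "'a \<times> 'b \<Rightarrow> real"
  assumes "finite (set_pmf M)" "finite (set_pmf N)" "\<And>y. 0 \<le> f y"
  shows "measure_pmf.expectation (pair_pmf M N) f = measure_pmf.expectation M (\<lambda>x. measure_pmf.expectation N (\<lambda>y. f (x, y)))"
  unfolding pair_pmf_def using assms
  by (subst exp_bind) (auto intro!: Bochner_Integration.integral_cong simp: exp_bind)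

lemma sum_list_diff_const:
  "sum_list (map (\<lambda>l. f l - c) S) = sum_list (map f S) - real (length S) *\<^sub>R (c::'a::real_vector)"
  by (induction S) (auto simp: algebra_simps)

lemma sq_expand:
  fixes g :: "nat \<Rightarrow> 'a::real_inner"
  assumes "(\<Sum>i<n. g i) = 0"
  shows "(\<Sum>i<n. (norm (g i + T))\<^sup>2) = (\<Sum>i<n. (norm (g i))\<^sup>2) + real n * (norm T)\<^sup>2"
proof -
  have "(\<Sum>i<n. (norm (g i + T))\<^sup>2) = (\<Sum>i<n. (norm (g i))\<^sup>2 + 2 * (g i \<bullet> T) + (norm T)\<^sup>2)"
    by (rule sum.cong) (simp_all add: power2_norm_eq_inner inner_add inner_commute algebra_simps)
  also have "\<dots> = (\<Sum>i<n. (norm (g i))\<^sup>2) + 2 * ((\<Sum>i<n. g i) \<bullet> T) + real n * (norm T)\<^sup>2"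
    by (simp add: sum.distrib sum_distrib_left inner_sum_left)
  finally show ?thesis using assms by simp
qed

lemma iid_sq:
  fixes g :: "nat \<Rightarrow> 'a::euclidean_space"
  assumes n: "0 < n" and g0: "(\<Sum>i<n. g i) = 0"
  shows "measure_pmf.expectation (iid_list m (pmf_of_set {..<n})) (\<lambda>S. (norm (sum_list (map g S)))\<^sup>2)
       = real m * ((\<Sum>i<n. (norm (g i))\<^sup>2) / real n)"
proof (induction m)
  case 0 then show ?case by simp
next
  case (Suc m)
  let ?p = "pmf_of_set {..<n::nat}"
  let ?q = "iid_list m ?p"
  have fq: "finite (set_pmf ?q)" using n by (intro fin_iid) (auto simp: set_pos)
  have "measure_pmf.expectation (iid_list (Suc m) ?p) (\<lambda>S. (norm (sum_list (map g S)))\<^sup>2)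
      = measure_pmf.expectation ?p (\<lambda>x. measure_pmf.expectation ?q (\<lambda>S. (norm (g x + sum_list (map g S)))\<^sup>2))"
    using n fq by (simp add: exp_bind set_pos)
  also have "\<dots> = (\<Sum>i<n. measure_pmf.expectation ?q (\<lambda>S. (norm (g i + sum_list (map g S)))\<^sup>2)) / real n"
    using n by (subst integral_pmf_of_set) auto
  also have "(\<Sum>i<n. measure_pmf.expectation ?q (\<lambda>S. (norm (g i + sum_list (map g S)))\<^sup>2))
      = measure_pmf.expectation ?q (\<lambda>S. \<Sum>i<n. (norm (g i + sum_list (map g S)))\<^sup>2)"
    by (rule Bochner_Integration.integral_sum[symmetric]) (auto intro: integrable_measure_pmf_finite fq)
  also have "\<dots> = measure_pmf.expectation ?q (\<lambda>S. (\<Sum>i<n. (norm (g i))\<^sup>2) + real n * (norm (sum_list (map g S)))\<^sup>2)"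
    by (simp add: sq_expand[OF g0])
  also have "\<dots> = (\<Sum>i<n. (norm (g i))\<^sup>2) + real n * measure_pmf.expectation ?q (\<lambda>S. (norm (sum_list (map g S)))\<^sup>2)"
    by (subst Bochner_Integration.integral_add) (auto intro: integrable_measure_pmf_finite fq)
  finally show ?case using Suc n by (simp add: field_simps)
qed

lemma bavg_full: "bavg [0..<n] f = favg n f"
  unfolding bavg_def favg_def
  by (simp add: sum_list_distinct_conv_sum_set atLeast0LessThan)

lemma batch_var:
  fixes f :: "nat \<Rightarrow> 'a::euclidean_space"
  assumes n: "0 < n" and m: "0 < m"
  shows "measure_pmf.expectation (batch_pmf n m) (\<lambda>S. (norm (bavg S f - favg n f))\<^sup>2)
       = of_bool (m < n) / real m * ((\<Sum>i<n. (norm (f i - favg n f))\<^sup>2) / real n)"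
proof (cases "m < n")
  case True
  let ?g = "\<lambda>l. f l - favg n f"
  let ?q = "iid_list m (pmf_of_set {..<n})"
  have g0: "(\<Sum>i<n. ?g i) = 0"
  proof -
    have "(\<Sum>i<n. ?g i) = (\<Sum>i<n. f i) - real n *\<^sub>R favg n f"
      by (simp add: sum_subtractf sum_constant_scaleR)
    also have "real n *\<^sub>R favg n f = (\<Sum>i<n. f i)" using n by (simp add: favg_def)
    finally show ?thesis by simp
  qed
  have pw: "(norm (bavg S f - favg n f))\<^sup>2 = (1 / real m)\<^sup>2 * (norm (sum_list (map ?g S)))\<^sup>2"
    if "S \<in> set_pmf ?q" for S
  proof -
    have len: "length S = m" using len_iid that by blast
    have "bavg S f - favg n f = (1 / real m) *\<^sub>R sum_list (map ?g S)"
      unfolding bavg_def sum_list_diff_const len using m by (simp add: algebra_simps)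
    then show ?thesis by (simp add: power_divide)
  qed
  have "measure_pmf.expectation (batch_pmf n m) (\<lambda>S. (norm (bavg S f - favg n f))\<^sup>2)
      = measure_pmf.expectation ?q (\<lambda>S. (1 / real m)\<^sup>2 * (norm (sum_list (map ?g S)))\<^sup>2)"
    unfolding batch_pmf_def if_P[OF True]
    by (rule integral_cong_AE) (auto simp: AE_measure_pmf_iff pw)
  also have "\<dots> = (1 / real m)\<^sup>2 * (real m * ((\<Sum>i<n. (norm (?g i))\<^sup>2) / real n))"
    by (simp add: iid_sq[OF n g0])
  finally show ?thesis using True m by (simp add: power2_eq_square field_simps)
next
  case False
  then show ?thesis unfolding batch_pmf_def by (simp add: bavg_full)
qed

lemma var_le:
  fixes f :: "nat \<Rightarrow> 'a::real_inner"
  assumes n: "0 < n"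
  shows "(\<Sum>i<n. (norm (f i - favg n f))\<^sup>2) \<le> (\<Sum>i<n. (norm (f i))\<^sup>2)"
proof -
  let ?mu = "favg n f"
  have s: "(\<Sum>i<n. f i) = real n *\<^sub>R ?mu" using n by (simp add: favg_def)
  have "(\<Sum>i<n. (norm (f i - ?mu))\<^sup>2) = (\<Sum>i<n. (norm (f i))\<^sup>2 - 2 * (f i \<bullet> ?mu) + (norm ?mu)\<^sup>2)"
    by (rule sum.cong) (simp_all add: power2_norm_eq_inner inner_diff inner_commute algebra_simps)
  also have "\<dots> = (\<Sum>i<n. (norm (f i))\<^sup>2) - 2 * ((\<Sum>i<n. f i) \<bullet> ?mu) + real n * (norm ?mu)\<^sup>2"
    by (simp add: sum.distrib sum_subtractf sum_distrib_left inner_sum_left)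
  also have "\<dots> = (\<Sum>i<n. (norm (f i))\<^sup>2) - real n * (norm ?mu)\<^sup>2"
    unfolding s by (simp add: power2_norm_eq_inner)
  finally show ?thesis by simp
qed

lemma G_lip:
  fixes G :: "nat \<Rightarrow> real^'n \<Rightarrow> real^'m" and JG :: "nat \<Rightarrow> real^'n \<Rightarrow> real^'n^'m"
  assumes "\<forall>j<n. \<forall>x. (G j has_derivative (\<lambda>h. JG j x *v h)) (at x)"
    and "\<forall>j<n. \<forall>x. onorm (\<lambda>h. JG j x *v h) \<le> B_G" and "j < n"
  shows "norm (G j x - G j y) \<le> B_G * norm (x - y)"
  using assms by (intro differentiable_bound[where S=UNIV and f' = "\<lambda>x h. JG j x *v h"]) auto

lemma sq_tri: "(norm (u + v :: 'a::real_normed_vector))\<^sup>2 \<le> 2 * (norm u)\<^sup>2 + 2 * (norm v)\<^sup>2"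
proof -
  have "norm (u + v) \<le> norm u + norm v" by (rule norm_triangle_ineq)
  then have "(norm (u + v))\<^sup>2 \<le> (norm u + norm v)\<^sup>2" by (simp add: power_mono)
  also have "\<dots> \<le> 2 * (norm u)\<^sup>2 + 2 * (norm v)\<^sup>2"
    using sum_squares_ge_zero[of "norm u - norm v" 0] by (simp add: power2_eq_square algebra_simps)
  finally show ?thesis .
qed

lemma bavg_diff: "bavg S (\<lambda>l. u l - v l) = bavg S u - bavg S v"
  unfolding bavg_def by (simp add: sum_list_subtractf algebra_simps)

lemma favg_diff: "favg n (\<lambda>l. u l - v l) = favg n u - favg n v"
  unfolding favg_def by (simp add: sum_subtractf algebra_simps)

theorem lemma3:
  fixes n A D K S s k :: nat and \<eta> B_G L_G H1 H2 :: real
    and G :: "nat \<Rightarrow> real^'n \<Rightarrow> real^'m"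
    and JG :: "nat \<Rightarrow> real^'n \<Rightarrow> real^'n^'m"
    and F :: "nat \<Rightarrow> real^'m \<Rightarrow> real"
    and gF :: "nat \<Rightarrow> real^'m \<Rightarrow> real^'m"
    and x0 :: "real^'n"
  assumes n_pos: "0 < n" and A_pos: "0 < A" and AD: "A \<le> D" and eta_pos: "0 < \<eta>"
    and s_lt: "s < S" and k_lt: "k < K"
    and G_deriv: "\<forall>j<n. \<forall>x. (G j has_derivative (\<lambda>h. JG j x *v h)) (at x)"
    and F_deriv: "\<forall>i<n. \<forall>y. (F i has_derivative (\<lambda>h. gF i y \<bullet> h)) (at y)"
    and A2_bound: "\<forall>j<n. \<forall>x. onorm (\<lambda>h. JG j x *v h) \<le> B_G"
    and A2_lip: "\<forall>j<n. \<forall>x y. onorm (\<lambda>h. (JG j x - JG j y) *v h) \<le> L_G * norm (x - y)"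
    and A6_1: "\<forall>x. (1 / real n) * (\<Sum>i<n. (norm (favg n (\<lambda>j. G j x) - G i x))\<^sup>2) \<le> H1"
    and A6_2: "\<forall>x y. (1 / (real n)\<^sup>2) * (\<Sum>i<n. \<Sum>j<n.
                 (norm (transpose (favg n (\<lambda>l. JG l x)) *v favg n (\<lambda>l. gF l y)
                        - transpose (JG j x) *v gF i y))\<^sup>2) \<le> H2"
  shows "measure_pmf.expectation
           (pair_pmf (sc_state n G JG gF A D \<eta> K x0 s k) (batch_pmf n A))
           (\<lambda>((xt, D1, x), Ab). (norm (Ghat G Ab D1 xt x - favg n (\<lambda>j. G j x)))\<^sup>2)
         \<le> 4 * (of_bool (A < n) / real A + of_bool (D < n) / real D) * B_G\<^sup>2
             * measure_pmf.expectation (sc_state n G JG gF A D \<eta> K x0 s k)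
                 (\<lambda>(xt, D1, x). (norm (x - xt))\<^sup>2)
           + 2 * (of_bool (D < n) / real D) * H1"
proof -
  have D_pos: "0 < D" using A_pos AD by simp
  have lip: "norm (G j x - G j y) \<le> B_G * norm (x - y)" if "j < n" for j x y
    using G_lip[OF G_deriv A2_bound that] .
  define a where "a = (\<lambda>xt x Ab. bavg Ab (\<lambda>l. G l x - G l xt) - favg n (\<lambda>l. G l x - G l xt))"
  define b where "b = (\<lambda>xt D1. bavg D1 (\<lambda>l. G l xt) - favg n (\<lambda>l. G l xt))"
  define cA where "cA = of_bool (A < n) / real A"
  define cD where "cD = of_bool (D < n) / real D"
  have cA0: "0 \<le> cA" and cD0: "0 \<le> cD" unfolding cA_def cD_def by auto
  let ?P = "sc_state n G JG gF A D \<eta> K x0 s k"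
  let ?Q = "batch_pmf n A"
  have fP: "finite (set_pmf ?P)" using fin_state n_pos .
  have fQ: "finite (set_pmf ?Q)" by (rule fin_batch)
  have split: "Ghat G Ab D1 xt x - favg n (\<lambda>j. G j x) = a xt x Ab + b xt D1" for xt D1 x Ab
    unfolding a_def b_def Ghat_def bavg_diff favg_diff by (simp add: algebra_simps)
  have Ea: "measure_pmf.expectation ?Q (\<lambda>Ab. (norm (a xt x Ab))\<^sup>2) \<le> cA * B_G\<^sup>2 * (norm (x - xt))\<^sup>2"
    for xt x
  proof -
    let ?f = "\<lambda>l. G l x - G l xt"
    have "measure_pmf.expectation ?Q (\<lambda>Ab. (norm (a xt x Ab))\<^sup>2)
        = cA * ((\<Sum>i<n. (norm (?f i - favg n ?f))\<^sup>2) / real n)"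
      unfolding a_def cA_def by (rule batch_var[OF n_pos A_pos])
    also have "\<dots> \<le> cA * ((\<Sum>i<n. (norm (?f i))\<^sup>2) / real n)"
      using var_le[OF n_pos, of ?f] cA0 by (intro mult_left_mono divide_right_mono) auto
    also have "(\<Sum>i<n. (norm (?f i))\<^sup>2) \<le> (\<Sum>i<n. B_G\<^sup>2 * (norm (x - xt))\<^sup>2)"
    proof (rule sum_mono)
      fix i assume "i \<in> {..<n}"
      then have "norm (?f i) \<le> B_G * norm (x - xt)" using lip by simp
      then have "(norm (?f i))\<^sup>2 \<le> (B_G * norm (x - xt))\<^sup>2" by (simp add: power_mono)
      then show "(norm (?f i))\<^sup>2 \<le> B_G\<^sup>2 * (norm (x - xt))\<^sup>2" by (simp add: power_mult_distrib)
    qed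
    then have "cA * ((\<Sum>i<n. (norm (?f i))\<^sup>2) / real n) \<le> cA * ((\<Sum>i<n. B_G\<^sup>2 * (norm (x - xt))\<^sup>2) / real n)"
      using cA0 by (intro mult_left_mono divide_right_mono) auto
    also have "\<dots> = cA * B_G\<^sup>2 * (norm (x - xt))\<^sup>2" using n_pos by simp
    finally show ?thesis .
  qed
  have Eb: "measure_pmf.expectation (batch_pmf n D) (\<lambda>D1. (norm (b xt D1))\<^sup>2) \<le> cD * H1" for xt
  proof -
    let ?f = "\<lambda>l. G l xt"
    have "measure_pmf.expectation (batch_pmf n D) (\<lambda>D1. (norm (b xt D1))\<^sup>2)
        = cD * ((\<Sum>i<n. (norm (?f i - favg n ?f))\<^sup>2) / real n)"
      unfolding b_def cD_def by (rule batch_var[OF n_pos D_pos])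
    also have "(\<Sum>i<n. (norm (?f i - favg n ?f))\<^sup>2) / real n \<le> H1"
      using spec[OF A6_1, of xt] by (simp add: norm_minus_commute)
    then have "cD * ((\<Sum>i<n. (norm (?f i - favg n ?f))\<^sup>2) / real n) \<le> cD * H1"
      using cD0 by (intro mult_left_mono) auto
    finally show ?thesis .
  qed
  have EbP: "measure_pmf.expectation ?P (\<lambda>(xt, D1, x). (norm (b xt D1))\<^sup>2) \<le> cD * H1"
  proof -
    have "measure_pmf.expectation ?P (\<lambda>(xt, D1, x). (norm (b xt D1))\<^sup>2)
      = measure_pmf.expectation (sc_outer n G JG gF A D \<eta> K x0 s)
          (\<lambda>xt. measure_pmf.expectation (batch_pmf n D) (\<lambda>D1. (norm (b xt D1))\<^sup>2))"
      unfolding sc_state_def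
      by (simp add: exp_bind fin_outer fin_batch fin_inner n_pos split_beta)
    also have "\<dots> \<le> measure_pmf.expectation (sc_outer n G JG gF A D \<eta> K x0 s) (\<lambda>xt. cD * H1)"
      by (rule integral_mono) (auto intro: integrable_measure_pmf_finite fin_outer n_pos Eb)
    also have "\<dots> = cD * H1" by simp
    finally show ?thesis .
  qed
  have "measure_pmf.expectation (pair_pmf ?P ?Q)
           (\<lambda>((xt, D1, x), Ab). (norm (Ghat G Ab D1 xt x - favg n (\<lambda>j. G j x)))\<^sup>2)
      = measure_pmf.expectation ?P (\<lambda>(xt, D1, x). measure_pmf.expectation ?Q
           (\<lambda>Ab. (norm (a xt x Ab + b xt D1))\<^sup>2))"
    by (subst exp_pair[OF fP fQ]) (auto intro!: Bochner_Integration.integral_cong simp: split split: prod.split)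
  also have "\<dots> \<le> measure_pmf.expectation ?P (\<lambda>(xt, D1, x).
        2 * (cA * B_G\<^sup>2 * (norm (x - xt))\<^sup>2) + 2 * (norm (b xt D1))\<^sup>2)"
  proof (rule integral_mono)
    show "integrable ?P (\<lambda>(xt, D1, x). measure_pmf.expectation ?Q (\<lambda>Ab. (norm (a xt x Ab + b xt D1))\<^sup>2))"
      by (rule integrable_measure_pmf_finite[OF fP])
    show "integrable ?P (\<lambda>(xt, D1, x). 2 * (cA * B_G\<^sup>2 * (norm (x - xt))\<^sup>2) + 2 * (norm (b xt D1))\<^sup>2)"
      by (rule integrable_measure_pmf_finite[OF fP])
    fix u :: "(real^'n) \<times> nat list \<times> (real^'n)"
    obtain xt D1 x where u: "u = (xt, D1, x)" by (cases u) auto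
    have "measure_pmf.expectation ?Q (\<lambda>Ab. (norm (a xt x Ab + b xt D1))\<^sup>2)
        \<le> measure_pmf.expectation ?Q (\<lambda>Ab. 2 * (norm (a xt x Ab))\<^sup>2 + 2 * (norm (b xt D1))\<^sup>2)"
      by (rule integral_mono) (auto intro: integrable_measure_pmf_finite[OF fQ] sq_tri)
    also have "\<dots> = 2 * measure_pmf.expectation ?Q (\<lambda>Ab. (norm (a xt x Ab))\<^sup>2) + 2 * (norm (b xt D1))\<^sup>2"
      by (subst Bochner_Integration.integral_add) (auto intro: integrable_measure_pmf_finite[OF fQ])
    also have "\<dots> \<le> 2 * (cA * B_G\<^sup>2 * (norm (x - xt))\<^sup>2) + 2 * (norm (b xt D1))\<^sup>2"
      using Ea[of xt x] by simp
    finally show "(\<lambda>(xt, D1, x). measure_pmf.expectation ?Q (\<lambda>Ab. (norm (a xt x Ab + b xt D1))\<^sup>2)) u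
        \<le> (\<lambda>(xt, D1, x). 2 * (cA * B_G\<^sup>2 * (norm (x - xt))\<^sup>2) + 2 * (norm (b xt D1))\<^sup>2) u"
      unfolding u by simp
  qed
  also have "\<dots> = 2 * cA * B_G\<^sup>2 * measure_pmf.expectation ?P (\<lambda>(xt, D1, x). (norm (x - xt))\<^sup>2)
        + 2 * measure_pmf.expectation ?P (\<lambda>(xt, D1, x). (norm (b xt D1))\<^sup>2)"
  proof -
    define f1 where "f1 = (\<lambda>(xt::real^'n, D1::nat list, x::real^'n). (norm (x - xt))\<^sup>2)"
    define f2 where "f2 = (\<lambda>(xt::real^'n, D1::nat list, x::real^'n). (norm (b xt D1))\<^sup>2)"
    have e: "(\<lambda>(xt, D1, x). 2 * (cA * B_G\<^sup>2 * (norm (x - xt))\<^sup>2) + 2 * (norm (b xt D1))\<^sup>2)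
        = (\<lambda>u. (2 * cA * B_G\<^sup>2) * f1 u + 2 * f2 u)"
      unfolding f1_def f2_def by (auto simp: fun_eq_iff algebra_simps)
    show ?thesis unfolding e f1_def[symmetric] f2_def[symmetric]
      by (simp add: Bochner_Integration.integral_add integrable_measure_pmf_finite[OF fP])
  qed
  also have "\<dots> \<le> 4 * (cA + cD) * B_G\<^sup>2 * measure_pmf.expectation ?P (\<lambda>(xt, D1, x). (norm (x - xt))\<^sup>2)
        + 2 * cD * H1"
  proof -
    have E0: "0 \<le> measure_pmf.expectation ?P (\<lambda>(xt, D1, x). (norm (x - xt))\<^sup>2)"
      by (rule integral_nonneg_AE) (auto simp: split_beta)
    have "2 * cA * B_G\<^sup>2 \<le> 4 * (cA + cD) * B_G\<^sup>2"
      using cA0 cD0 by (intro mult_right_mono) auto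
    then have "2 * cA * B_G\<^sup>2 * measure_pmf.expectation ?P (\<lambda>(xt, D1, x). (norm (x - xt))\<^sup>2)
       \<le> 4 * (cA + cD) * B_G\<^sup>2 * measure_pmf.expectation ?P (\<lambda>(xt, D1, x). (norm (x - xt))\<^sup>2)"
      using E0 by (rule mult_right_mono)
    then show ?thesis using EbP by linarith
  qed
  finally show ?thesis unfolding cA_def cD_def by simp
qed

end
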